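(* Let $K$ be a scattered compact Hausdorff space and let $X$ and $Y$ be real Banach spaces with $Y$ separable. If $Y$ embeds isomorphically into $C(K,X)$, then there exist a countable metrizable compact space $K_0$ and a separable closed subspace $X_0\subseteq X$ such that $Y$ embeds isomorphically into $C(K_0,X_0)$ and $C(K_0,X_0)$ embeds isomorphically into $C(K,X)$.
   Context: For a compact Hausdorff space $K$ and a real Banach space $X$, $C(K,X)$ denotes the Banach space of continuous functions $f:K\to X$ with the norm $\|f\|=\sup_{x\in K}\|f(x)\|$. An isomorphic embedding is a linear $T$ with $A\|u\|\le\|Tu\|\le B\|u\|$ for some $A,B>0$. A topological space is scattered if every nonempty subset has an isolated point. *)

theory Defs
  imports "HOL-Analysis.Analysis"
begin

definition scattered_space :: "'a topology \<Rightarrow> bool" where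
  "scattered_space K \<longleftrightarrow>
     (\<forall>S. S \<subseteq> topspace K \<and> S \<noteq> {} \<longrightarrow> (\<exists>x\<in>S. \<exists>U. openin K U \<and> U \<inter> S = {x}))"

text \<open>C(K,X0): continuous functions on the carrier of K with values in X0,
  extended by 0 outside the carrier (so that equality of elements is equality of functions).\<close>
definition Cfun :: "'k topology \<Rightarrow> 'x::real_normed_vector set \<Rightarrow> ('k \<Rightarrow> 'x) set" where
  "Cfun K X0 = {f. continuous_map K euclidean f \<and> f ` topspace K \<subseteq> X0 \<and>
                   (\<forall>t. t \<notin> topspace K \<longrightarrow> f t = 0)}"

definition Cnorm :: "'k topology \<Rightarrow> ('k \<Rightarrow> 'x::real_normed_vector) \<Rightarrow> real" where
  "Cnorm K f = (if topspace K = {} then 0 else (SUP t\<in>topspace K. norm (f t)))"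

definition embeds_into_C ::
  "('y::real_normed_vector \<Rightarrow> 'k \<Rightarrow> 'x::real_normed_vector) \<Rightarrow> 'k topology \<Rightarrow> 'x set \<Rightarrow> bool" where
  "embeds_into_C T K X0 \<longleftrightarrow>
     (\<forall>u. T u \<in> Cfun K X0) \<and>
     (\<forall>u v. T (u + v) = (\<lambda>t. T u t + T v t)) \<and>
     (\<forall>c u. T (c *\<^sub>R u) = (\<lambda>t. c *\<^sub>R T u t)) \<and>
     (\<exists>A B. 0 < A \<and> 0 < B \<and> (\<forall>u. A * norm u \<le> Cnorm K (T u) \<and> Cnorm K (T u) \<le> B * norm u))"

definition C_embeds_into_C ::
  "(('a \<Rightarrow> 'x::real_normed_vector) \<Rightarrow> ('k \<Rightarrow> 'x)) \<Rightarrow> 'a topology \<Rightarrow> 'x set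
     \<Rightarrow> 'k topology \<Rightarrow> 'x set \<Rightarrow> bool" where
  "C_embeds_into_C S K0 X0 K X1 \<longleftrightarrow>
     S ` Cfun K0 X0 \<subseteq> Cfun K X1 \<and>
     (\<forall>f\<in>Cfun K0 X0. \<forall>g\<in>Cfun K0 X0. S (\<lambda>t. f t + g t) = (\<lambda>s. S f s + S g s)) \<and>
     (\<forall>c. \<forall>f\<in>Cfun K0 X0. S (\<lambda>t. c *\<^sub>R f t) = (\<lambda>s. c *\<^sub>R S f s)) \<and>
     (\<exists>A B. 0 < A \<and> 0 < B \<and>
        (\<forall>f\<in>Cfun K0 X0. A * Cnorm K0 f \<le> Cnorm K (S f) \<and> Cnorm K (S f) \<le> B * Cnorm K0 f))"

end

theory Submission
  imports Defs
begin


lemma scattered_image_countable: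
  fixes q :: "'k \<Rightarrow> 'm::metric_space"
  assumes cK: "compact_space K" and sK: "scattered_space K" and cq: "continuous_map K euclidean q"
  shows "countable (q ` topspace K)"
proof -
  define M where "M = q ` topspace K"
  have compM: "compact M"
    using image_compactin[OF _ cq] cK unfolding compact_space_def M_def by simp
  define P where "P = {p\<in>M. \<forall>e>0. uncountable (ball p e \<inter> M)}"
  have MP: "countable (M - P)"
  proof -
    have An: "countable {p\<in>M. countable (ball p (1/Suc n) \<inter> M)}" for n
    proof -
      define r where "r = 1 / real (Suc n)"
      have r: "r > 0" by (simp add: r_def)
      obtain D where D: "finite D" "D \<subseteq> M" "M \<subseteq> (\<Union>x\<in>D. ball x (r/2))"
        using seq_compact_imp_totally_bounded[OF compact_imp_seq_compact[OF compM]] r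
        by (meson half_gt_zero)
      let ?A = "{p\<in>M. countable (ball p r \<inter> M)}"
      have "?A \<subseteq> (\<Union>x\<in>D. ball x (r/2) \<inter> ?A)" using D by blast
      moreover have "countable (ball x (r/2) \<inter> ?A)" for x
      proof (cases "ball x (r/2) \<inter> ?A = {}")
        case True then show ?thesis by simp
      next
        case False
        then obtain p where p: "p \<in> ball x (r/2)" "p \<in> M" "countable (ball p r \<inter> M)" by blast
        have "ball x (r/2) \<inter> ?A \<subseteq> ball p r \<inter> M"
        proof
          fix y assume y: "y \<in> ball x (r/2) \<inter> ?A"
          have "dist p y \<le> dist p x + dist x y" by (rule dist_triangle)
          with p(1) y show "y \<in> ball p r \<inter> M" by (auto simp: dist_commute)
        qed
        then show ?thesis using p(3) countable_subset by blast
      qed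
      ultimately show ?thesis using D(1) unfolding r_def
        by (meson countable_UN countable_finite countable_subset)
    qed
    have "M - P \<subseteq> (\<Union>n. {p\<in>M. countable (ball p (1/Suc n) \<inter> M)})"
    proof
      fix p assume "p \<in> M - P"
      then obtain e where e: "e>0" "countable (ball p e \<inter> M)" "p\<in>M" by (auto simp: P_def)
      obtain n where n: "1/ real (Suc n) < e" using e(1) by (meson nat_approx_posE)
      then have "ball p (1/Suc n) \<inter> M \<subseteq> ball p e \<inter> M" by auto
      then show "p \<in> (\<Union>n. {p\<in>M. countable (ball p (1/Suc n) \<inter> M)})"
        using e countable_subset by blast
    qed
    moreover have "countable (\<Union>n. {p\<in>M. countable (ball p (1/Suc n) \<inter> M)})"
      using An by (intro countable_UN) auto
    ultimately show ?thesis using countable_subset by blast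
  qed
  have lim: "\<exists>p'\<in>P. p' \<noteq> p \<and> dist p' p < e" if "p \<in> P" "e > 0" for p e
  proof (rule ccontr)
    assume "\<not> ?thesis"
    then have "ball p e \<inter> M \<subseteq> insert p (M - P)" by (auto simp: dist_commute)
    then have "countable (ball p e \<inter> M)" using MP countable_subset by (meson countable_insert)
    with that show False by (auto simp: P_def)
  qed
  have "P = {}"
  proof (rule ccontr)
    assume Pne: "P \<noteq> {}"
    define \<V> where "\<V> = {V. openin K V \<and> P \<subseteq> q ` (topspace K - V)}"
    have "\<exists>V0\<in>\<V>. \<forall>X\<in>\<V>. V0 \<subseteq> X \<longrightarrow> X = V0"
    proof (rule subset_Zorn')
      fix C assume ch: "subset.chain \<V> C"
      show "\<Union>C \<in> \<V>"
        unfolding \<V>_def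
      proof (intro CollectI conjI)
        show "openin K (\<Union>C)" using ch unfolding subset_chain_def \<V>_def by (intro openin_Union) auto
        show "P \<subseteq> q ` (topspace K - \<Union>C)"
        proof
          fix p assume pP: "p \<in> P"
          define Q where "Q = {t \<in> topspace K. q t \<in> {p}}"
          have clQ: "closedin K Q" unfolding Q_def
            by (rule closedin_continuous_map_preimage[OF cq]) simp
          define g where "g V = Q - V" for V
          define \<U> where "\<U> = insert Q (g ` C)"
          have "\<Inter>\<U> \<noteq> {}"
          proof -
            have cl: "\<forall>S\<in>\<U>. closedin K S"
            proof
              fix S assume "S \<in> \<U>"
              then obtain V where SV: "S = Q \<or> (V \<in> C \<and> S = Q - V)" unfolding \<U>_def g_def by blast
              have "\<forall>V\<in>C. openin K V" using ch unfolding subset_chain_def \<V>_def by blast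
              then show "closedin K S" using SV clQ closedin_diff by metis
            qed
            have fip: "\<forall>F. finite F \<and> F \<subseteq> \<U> \<longrightarrow> \<Inter>F \<noteq> {}"
            proof (intro allI impI)
              fix F assume F: "finite F \<and> F \<subseteq> \<U>"
              have F1: "F - {Q} \<subseteq> g ` C" using F unfolding \<U>_def by blast
              have F2: "finite (F - {Q})" using F by blast
              obtain C' where C': "C' \<subseteq> C" "finite C'" "F - {Q} = g ` C'"
                using finite_subset_image[OF F2 F1] by blast
              have Fsub: "F \<subseteq> insert Q (g ` C')" using C' by blast
              show "\<Inter>F \<noteq> {}"
              proof (cases "C' = {}")
                case True
                then have QF: "Q \<subseteq> \<Inter>F" using Fsub by auto
                have "p \<in> M" using pP by (simp add: P_def)
                then obtain t where "t \<in> topspace K" "q t = p" by (auto simp: M_def)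
                then have "t \<in> Q" by (simp add: Q_def)
                then have "Q \<noteq> {}" by blast
                with QF show ?thesis by blast
              next
                case False
                have chC: "C \<subseteq> \<V>" "\<forall>X\<in>C. \<forall>Y\<in>C. X \<subseteq> Y \<or> Y \<subseteq> X"
                  using ch by (simp_all add: subset_chain_def)
                have C'V: "C' \<subseteq> \<V>" by (rule subset_trans[OF C'(1) chC(1)])
                have C'ch: "\<forall>X\<in>C'. \<forall>Y\<in>C'. X \<subseteq> Y \<or> Y \<subseteq> X" using chC(2) C'(1) by blast
                have ch': "subset.chain \<V> C'" using C'V C'ch by (simp add: subset_chain_def)
                have V0: "\<Union>C' \<in> C'" by (rule Union_in_chain[OF C'(2) False ch'])
                then have "\<Union>C' \<in> \<V>" using C'V by blast
                then have "p \<in> q ` (topspace K - \<Union>C')" using pP unfolding \<V>_def by blast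
                then have "g (\<Union>C') \<noteq> {}" unfolding g_def Q_def by blast
                moreover have "g (\<Union>C') \<subseteq> \<Inter>F" using Fsub by (auto simp: g_def)
                ultimately show ?thesis by blast
              qed
            qed
            show ?thesis using cK[unfolded compact_space_fip, rule_format, of \<U>] cl fip by blast
          qed
          then obtain t where "t \<in> \<Inter>\<U>" by blast
          then have "t \<in> Q" "\<forall>V\<in>C. t \<notin> V" unfolding \<U>_def g_def by blast+
          then show "p \<in> q ` (topspace K - \<Union>C)" by (auto simp: Q_def)
        qed
      qed
    qed
    then obtain V0 where V0: "V0 \<in> \<V>" and max: "\<And>X. X \<in> \<V> \<Longrightarrow> V0 \<subseteq> X \<Longrightarrow> X = V0"
      by blast
    define G where "G = topspace K - V0"
    have "G \<noteq> {}" using V0 Pne by (auto simp: \<V>_def G_def)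
    moreover have "G \<subseteq> topspace K" by (auto simp: G_def)
    ultimately obtain x U where x: "x \<in> G" "openin K U" "U \<inter> G = {x}"
      using sK unfolding scattered_space_def by blast
    define V1 where "V1 = V0 \<union> U"
    have "V1 \<in> \<V>"
    proof -
      have op: "openin K V1" using V0 x by (auto simp: \<V>_def V1_def)
      have eq: "topspace K - V1 = G - {x}" using x by (auto simp: V1_def G_def)
      have clG': "closedin K (G - {x})"
        using op eq by (metis closedin_diff closedin_topspace)
      have cmp: "compact (q ` (G - {x}))"
        using image_compactin[OF closedin_compact_space[OF cK clG'] cq] by simp
      have sub: "P - {q x} \<subseteq> q ` (G - {x})"
      proof
        fix p' assume p': "p' \<in> P - {q x}"
        then have "p' \<in> q ` G" using V0 unfolding \<V>_def G_def by blast
        then obtain t where "t \<in> G" "p' = q t" by blast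
        with p' show "p' \<in> q ` (G - {x})" by blast
      qed
      have "P \<subseteq> q ` (G - {x})"
      proof
        fix p assume pP: "p \<in> P"
        show "p \<in> q ` (G - {x})"
        proof (cases "p = q x")
          case False then show ?thesis using sub pP by blast
        next
          case True
          show ?thesis
          proof (subst closed_approachable[OF compact_imp_closed[OF cmp], symmetric], intro allI impI)
            fix e :: real assume "e > 0"
            then obtain p' where "p' \<in> P" "p' \<noteq> p" "dist p' p < e" using lim pP by blast
            then show "\<exists>y\<in>q ` (G - {x}). dist y p < e" using sub True by blast
          qed
        qed
      qed
      then show ?thesis using op eq by (simp add: \<V>_def)
    qed
    moreover have "V0 \<subseteq> V1" by (simp add: V1_def)
    ultimately have "V1 = V0" using max by blast
    moreover have "x \<in> V1" "x \<notin> V0" using x by (auto simp: V1_def G_def)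
    ultimately show False by blast
  qed
  then show ?thesis using MP by (simp add: M_def)
qed



lemma Cnorm_eq:
  assumes "(\<lambda>t. norm (f t)) ` topspace K = (\<lambda>t. norm (g t)) ` topspace K'"
  shows "Cnorm K f = Cnorm K' g"
proof -
  have "topspace K = {} \<longleftrightarrow> topspace K' = {}" using assms by (metis image_is_empty)
  then show ?thesis unfolding Cnorm_def using assms by simp
qed

lemma Cnorm_ge:
  assumes "continuous_map K euclidean f" "compact_space K" "t \<in> topspace K"
  shows "norm (f t) \<le> Cnorm K f"
proof -
  have "compactin euclidean (f ` topspace K)"
    using image_compactin[OF _ assms(1)] assms(2) unfolding compact_space_def by blast
  then have "bounded (f ` topspace K)" by (simp add: compact_imp_bounded)
  then obtain a where "\<forall>x\<in>f ` topspace K. norm x \<le> a" by (auto simp: bounded_iff)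
  then have bdd: "bdd_above ((\<lambda>t. norm (f t)) ` topspace K)" by (auto simp: bdd_above_def)
  have "topspace K \<noteq> {}" using assms(3) by blast
  then show ?thesis using assms(3) bdd unfolding Cnorm_def by (auto intro: cSUP_upper)
qed

theorem lemma2p4:
  fixes K :: "'k topology"
  assumes "compact_space K" and "Hausdorff_space K" and "scattered_space K"
    and "separable_space (euclidean :: ('y::banach) topology)"
    and "\<exists>T :: 'y \<Rightarrow> 'k \<Rightarrow> 'x::banach. embeds_into_C T K UNIV"
  shows "\<exists>(K0 :: nat topology) (X0 :: 'x set).
           compact_space K0 \<and> metrizable_space K0 \<and> countable (topspace K0) \<and>
           subspace X0 \<and> closed X0 \<and> separable_space (subtopology euclidean X0) \<and>
           (\<exists>T0 :: 'y \<Rightarrow> nat \<Rightarrow> 'x. embeds_into_C T0 K0 X0) \<and>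
           (\<exists>S :: (nat \<Rightarrow> 'x) \<Rightarrow> ('k \<Rightarrow> 'x). C_embeds_into_C S K0 X0 K UNIV)"
proof -
  obtain T :: "'y \<Rightarrow> 'k \<Rightarrow> 'x" where T: "embeds_into_C T K UNIV" using assms(5) by blast
  have TC: "\<And>u. T u \<in> Cfun K UNIV" using T unfolding embeds_into_C_def by blast
  have Tadd: "\<And>u v. T (u+v) = (\<lambda>t. T u t + T v t)" using T unfolding embeds_into_C_def by blast
  have Tsc: "\<And>c u. T (c *\<^sub>R u) = (\<lambda>t. c *\<^sub>R T u t)" using T unfolding embeds_into_C_def by blast
  obtain A B where AB: "0<A" "0<B" "\<And>u. A * norm u \<le> Cnorm K (T u)" "\<And>u. Cnorm K (T u) \<le> B * norm u"
    using T unfolding embeds_into_C_def by blast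
  have Tcont: "\<And>u. continuous_map K euclidean (T u)" using TC by (simp add: Cfun_def)
  have Tdiff: "T (u - v) = (\<lambda>t. T u t - T v t)" for u v
  proof -
    have "T (u - v) = T (u + (-1) *\<^sub>R v)" by simp
    also have "\<dots> = (\<lambda>t. T u t - T v t)" unfolding Tadd Tsc by simp
    finally show ?thesis .
  qed
  have Tbd: "norm (T u t) \<le> B * norm u" if "t \<in> topspace K" for u t
    using Cnorm_ge[OF Tcont[of u] assms(1) that] AB(4)[of u] by linarith
  have Tdist: "norm (T u t - T v t) \<le> B * dist u v" if "t \<in> topspace K" for u v t
    using Tbd[OF that, of "u - v"] by (simp add: Tdiff dist_norm)
  obtain D :: "'y set" where D: "countable D" "closure D = UNIV"
    using assms(4) unfolding separable_space_def by (auto simp: euclidean_closure_of)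
  have Dne: "D \<noteq> {}" using D(2) by auto
  define d where "d = from_nat_into D"
  have dD: "range d = D" using D Dne by (simp add: d_def range_from_nat_into)
  have dense: "\<exists>n. dist (d n) u < e" if e0: "e > 0" for u e
  proof -
    have "u \<in> closure D" using D by simp
    then obtain y where "y \<in> D" "dist y u < e" using e0 closure_approachable by blast
    then show ?thesis using dD by auto
  qed
  define q where "q t = (\<lambda>n. T (d n) t)" for t
  have qcont: "continuous_map K euclidean q"
    unfolding q_def
    by (subst euclidean_product_topology[symmetric]) (simp add: continuous_map_componentwise_UNIV Tcont)
  have approx: "\<exists>n. \<forall>t\<in>topspace K. norm (T u t - q t n) < e" if e0: "e > 0" for u e
  proof -
    obtain n where n: "dist (d n) u < e / B" using dense AB(2) e0 by (meson divide_pos_pos)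
    have "norm (T u t - q t n) < e" if t: "t \<in> topspace K" for t
    proof -
      have "norm (T u t - q t n) \<le> B * dist u (d n)" using Tdist[OF t] by (simp add: q_def)
      also have "\<dots> < e" using n AB(2) by (simp add: dist_commute field_simps)
      finally show ?thesis .
    qed
    then show ?thesis by blast
  qed
  have fact: "T u s = T u t" if st: "s \<in> topspace K" "t \<in> topspace K" "q s = q t" for u s t
  proof -
    have "norm (T u s - T u t) \<le> 0"
    proof (rule field_le_epsilon)
      fix e :: real assume e: "e > 0"
      obtain n where n: "\<forall>t\<in>topspace K. norm (T u t - q t n) < e/2"
        using approx e by (meson half_gt_zero)
      have "norm (T u s - T u t) \<le> norm (T u s - q s n) + norm (q t n - T u t)"
        using st(3) norm_triangle_ineq[of "T u s - q s n" "q t n - T u t"] by simp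
      also have "\<dots> < e"
        using n[rule_format, OF st(1)] n[rule_format, OF st(2)] by (simp add: norm_minus_commute)
      finally show "norm (T u s - T u t) \<le> 0 + e" by simp
    qed
    then show ?thesis by simp
  qed
  define M where "M = q ` topspace K"
  have cM: "countable M" unfolding M_def
    by (rule scattered_image_countable[OF assms(1) assms(3) qcont])
  define e where "e = to_nat_on M"
  have einj: "inj_on e M" by (simp add: e_def inj_on_to_nat_on cM)
  define N where "N = e ` M"
  define h where "h t = e (q t)" for t
  have hN: "h ` topspace K = N" by (auto simp: h_def N_def M_def)
  define L where "L = (\<lambda>U. U \<subseteq> N \<and> openin K {t \<in> topspace K. h t \<in> U})"
  have istop: "istopology L"
    unfolding istopology_def L_def
  proof (rule conjI; intro allI impI)
    fix S T assume S: "S \<subseteq> N \<and> openin K {t \<in> topspace K. h t \<in> S}"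
      and T: "T \<subseteq> N \<and> openin K {t \<in> topspace K. h t \<in> T}"
    have eq: "{t \<in> topspace K. h t \<in> S \<inter> T} = {t \<in> topspace K. h t \<in> S} \<inter> {t \<in> topspace K. h t \<in> T}"
      by blast
    show "S \<inter> T \<subseteq> N \<and> openin K {t \<in> topspace K. h t \<in> S \<inter> T}"
      using S T unfolding eq by (auto intro: openin_Int)
  next
    fix \<K> assume H: "\<forall>S\<in>\<K>. S \<subseteq> N \<and> openin K {t \<in> topspace K. h t \<in> S}"
    have eq: "{t \<in> topspace K. h t \<in> \<Union>\<K>} = (\<Union>S\<in>\<K>. {t \<in> topspace K. h t \<in> S})"
      by blast
    show "\<Union>\<K> \<subseteq> N \<and> openin K {t \<in> topspace K. h t \<in> \<Union>\<K>}"
      using H unfolding eq by (auto intro: openin_Union)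
  qed
  define K0 where "K0 = topology L"
  have openK0: "openin K0 U \<longleftrightarrow> U \<subseteq> N \<and> openin K {t \<in> topspace K. h t \<in> U}" for U
    unfolding K0_def using istop by (simp add: topology_inverse' L_def)
  have topK0: "topspace K0 = N"
  proof
    have "{t \<in> topspace K. h t \<in> N} = topspace K" using hN by blast
    then have "openin K0 N" by (simp add: openK0)
    then show "N \<subseteq> topspace K0" by (rule openin_subset)
    show "topspace K0 \<subseteq> N" using openK0[of "topspace K0"] by simp
  qed
  have quot: "quotient_map K K0 h"
    unfolding quotient_map_def using hN topK0 openK0 by auto
  have hcont: "continuous_map K K0 h" using quot by (rule quotient_imp_continuous_map)
  have cK0: "compact_space K0"
    using image_compactin[OF _ hcont, of "topspace K"] assms(1) hN topK0
    unfolding compact_space_def by simp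
  have ctK0: "countable (topspace K0)" using topK0 cM by (simp add: N_def)
  define \<phi> where "\<phi> = from_nat_into M"
  have \<phi>e: "\<phi> (e m) = m" if "m \<in> M" for m
    using that cM by (simp add: \<phi>_def e_def from_nat_into_to_nat_on)
  have \<phi>h: "\<phi> (h t) = q t" if "t \<in> topspace K" for t
    using that \<phi>e by (simp add: h_def M_def)
  have "continuous_map K (subtopology euclidean M) q"
    using qcont by (auto simp: continuous_map_in_subtopology M_def)
  then have "continuous_map K (subtopology euclidean M) (\<phi> \<circ> h)"
    by (rule continuous_map_eq) (simp add: \<phi>h)
  then have \<phi>cont: "continuous_map K0 (subtopology euclidean M) \<phi>"
    by (rule continuous_compose_quotient_map[OF quot])
  have "homeomorphic_map K0 (subtopology euclidean M) \<phi>"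
  proof (rule continuous_imp_homeomorphic_map[OF \<phi>cont cK0])
    show "Hausdorff_space (subtopology euclidean M)"
      by (simp add: Hausdorff_space_subtopology)
    show "\<phi> ` topspace K0 = topspace (subtopology euclidean M)"
      using \<phi>e by (force simp: topK0 N_def)
    show "inj_on \<phi> (topspace K0)"
      unfolding topK0 N_def by (intro inj_onI) (auto simp: \<phi>e)
  qed
  then have "K0 homeomorphic_space (subtopology euclidean M)"
    unfolding homeomorphic_space_def using homeomorphic_map_maps by blast
  then have mK0: "metrizable_space K0"
    using homeomorphic_metrizable_space metrizable_space_subtopology metrizable_space_euclidean
    by blast
  define W where "W = (\<lambda>(m, n). m n) ` (M \<times> (UNIV :: nat set))"
  have cW: "countable W" unfolding W_def using cM by (auto intro: countable_SIGMA)
  define F where "F = (\<lambda>(a::'x, b::'x, r::rat). a + of_rat r *\<^sub>R b)"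
  define Qs where "Qs = rec_nat (insert 0 W) (\<lambda>_ S. F ` (S \<times> S \<times> (UNIV :: rat set)))"
  have Qs0: "Qs 0 = insert 0 W" by (simp add: Qs_def)
  have QsS: "Qs (Suc k) = F ` (Qs k \<times> Qs k \<times> (UNIV :: rat set))" for k by (simp add: Qs_def)
  have cQs: "countable (Qs k)" for k
  proof (induction k)
    case 0 then show ?case using cW by (simp add: Qs0)
  next
    case (Suc k) then show ?case unfolding QsS
      by (intro countable_image countable_SIGMA countableI_type) auto
  qed
  have Qsmono1: "Qs k \<subseteq> Qs (Suc k)" for k
  proof
    fix a assume "a \<in> Qs k"
    then have "F (a, a, 0) \<in> Qs (Suc k)" unfolding QsS by blast
    then show "a \<in> Qs (Suc k)" by (simp add: F_def)
  qed
  have Qsmono: "Qs i \<subseteq> Qs j" if "i \<le> j" for i j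
    using lift_Suc_mono_le[of Qs, OF Qsmono1 that] .
  define Q where "Q = (\<Union>k. Qs k)"
  have cQ: "countable Q" unfolding Q_def using cQs by (intro countable_UN) auto
  have WQ: "W \<subseteq> Q" "0 \<in> Q" unfolding Q_def using Qs0 by auto
  have Qclosed: "a + of_rat r *\<^sub>R b \<in> Q" if ab: "a \<in> Q" "b \<in> Q" for a b r
  proof -
    obtain i j where ij: "a \<in> Qs i" "b \<in> Qs j" using ab unfolding Q_def by blast
    have a: "a \<in> Qs (max i j)" using Qsmono[of i "max i j"] ij(1) by auto
    have b: "b \<in> Qs (max i j)" using Qsmono[of j "max i j"] ij(2) by auto
    have "F (a, b, r) \<in> Qs (Suc (max i j))" unfolding QsS using a b by blast
    then have "a + of_rat r *\<^sub>R b \<in> Qs (Suc (max i j))" by (simp add: F_def)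
    then show ?thesis unfolding Q_def by blast
  qed
  define X0 where "X0 = closure Q"
  have lin: "x + c *\<^sub>R y \<in> X0" if "x \<in> X0" "y \<in> X0" for x y c
  proof -
    define G where "G = (\<lambda>z::'x \<times> 'x \<times> real. fst z + snd (snd z) *\<^sub>R fst (snd z))"
    have "G ` (Q \<times> Q \<times> \<rat>) \<subseteq> closure Q"
    proof
      fix w assume "w \<in> G ` (Q \<times> Q \<times> \<rat>)"
      then obtain a b c where abc: "a \<in> Q" "b \<in> Q" "c \<in> \<rat>" "w = a + c *\<^sub>R b"
        by (auto simp: G_def)
      from abc(3) obtain r where "c = of_rat r" by (rule Rats_cases)
      then have "w \<in> Q" using Qclosed abc by simp
      then show "w \<in> closure Q" using closure_subset by blast
    qed
    moreover have "continuous_on (closure (Q \<times> Q \<times> \<rat>)) G"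
      unfolding G_def by (intro continuous_intros)
    ultimately have "G ` closure (Q \<times> Q \<times> \<rat>) \<subseteq> closure Q"
      by (intro image_closure_subset) auto
    moreover have "(x, y, c) \<in> closure (Q \<times> Q \<times> \<rat>)"
      using that by (simp add: closure_Times Rats_closure_real X0_def)
    ultimately show ?thesis by (force simp: G_def X0_def)
  qed
  have X00: "0 \<in> X0" using WQ closure_subset unfolding X0_def by blast
  have subX0: "subspace X0"
    unfolding subspace_def
  proof (intro conjI ballI allI)
    show "0 \<in> X0" by (rule X00)
    show "x + y \<in> X0" if "x \<in> X0" "y \<in> X0" for x y using lin[OF that, of 1] by simp
    show "c *\<^sub>R x \<in> X0" if "x \<in> X0" for c x using lin[OF X00 that, of c] by simp
  qed
  have clX0: "closed X0" by (simp add: X0_def)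
  have sepX0: "separable_space (subtopology euclidean X0)"
    unfolding separable_space_def
  proof (intro exI conjI)
    show "countable Q" by (rule cQ)
    show "Q \<subseteq> topspace (subtopology euclidean X0)" using closure_subset by (simp add: X0_def)
    have "X0 \<inter> Q = Q" using closure_subset by (auto simp: X0_def)
    then show "subtopology euclidean X0 closure_of Q = topspace (subtopology euclidean X0)"
      by (simp add: closure_of_subtopology euclidean_closure_of X0_def)
  qed
  have Tval: "T u t \<in> X0" if tK: "t \<in> topspace K" for u t
    unfolding X0_def closure_approachable
  proof (intro allI impI)
    fix \<epsilon> :: real assume "\<epsilon> > 0"
    then obtain n where n: "norm (T u t - q t n) < \<epsilon>" using approx tK by blast
    have "q t n \<in> W" unfolding W_def using tK by (force simp: M_def)
    moreover have "dist (q t n) (T u t) < \<epsilon>" using n by (simp add: dist_norm norm_minus_commute)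
    ultimately show "\<exists>y\<in>Q. dist y (T u t) < \<epsilon>" using WQ by blast
  qed
  define T0 where "T0 u n = (if n \<in> N then T u (SOME t. t \<in> topspace K \<and> h t = n) else 0)" for u n
  have T0h: "T0 u (h t) = T u t" if t: "t \<in> topspace K" for u t
  proof -
    have hN': "h t \<in> N" using hN t by blast
    define s where "s = (SOME s. s \<in> topspace K \<and> h s = h t)"
    have s: "s \<in> topspace K \<and> h s = h t" unfolding s_def by (rule someI[of _ t]) (simp add: t)
    have "q s = q t" using s einj t unfolding h_def M_def by (meson image_eqI inj_onD)
    then have "T u s = T u t" using fact s t by blast
    then show ?thesis using hN' by (simp add: T0_def s_def)
  qed
  have T0C: "T0 u \<in> Cfun K0 X0" for u
  proof -
    have "continuous_map K euclidean (T0 u \<circ> h)"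
      by (rule continuous_map_eq[OF Tcont[of u]]) (simp add: T0h)
    then have c: "continuous_map K0 euclidean (T0 u)"
      by (rule continuous_compose_quotient_map[OF quot])
    have "T0 u ` topspace K0 \<subseteq> X0"
      using T0h Tval hN topK0 by auto
    moreover have "\<forall>n. n \<notin> topspace K0 \<longrightarrow> T0 u n = 0" by (simp add: T0_def topK0)
    ultimately show ?thesis using c by (simp add: Cfun_def)
  qed
  have T0norm: "Cnorm K0 (T0 u) = Cnorm K (T u)" for u
  proof (rule Cnorm_eq)
    have "(\<lambda>n. norm (T0 u n)) ` topspace K0 = (\<lambda>t. norm (T0 u (h t))) ` topspace K"
      by (simp add: topK0 hN[symmetric] image_image)
    also have "\<dots> = (\<lambda>t. norm (T u t)) ` topspace K" by (simp add: T0h)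
    finally show "(\<lambda>n. norm (T0 u n)) ` topspace K0 = (\<lambda>t. norm (T u t)) ` topspace K" .
  qed
  have emb0: "embeds_into_C T0 K0 X0"
    unfolding embeds_into_C_def
  proof (intro conjI allI)
    show "T0 u \<in> Cfun K0 X0" for u by (rule T0C)
    show "T0 (u + v) = (\<lambda>t. T0 u t + T0 v t)" for u v
      by (rule ext) (simp add: T0_def Tadd)
    show "T0 (c *\<^sub>R u) = (\<lambda>t. c *\<^sub>R T0 u t)" for c u
      by (rule ext) (simp add: T0_def Tsc)
    show "\<exists>A B. 0 < A \<and> 0 < B \<and> (\<forall>u. A * norm u \<le> Cnorm K0 (T0 u) \<and> Cnorm K0 (T0 u) \<le> B * norm u)"
      using AB by (auto simp: T0norm)
  qed
  define S where "S f = (\<lambda>s. if s \<in> topspace K then f (h s) else (0::'x))" for f :: "nat \<Rightarrow> 'x"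
  have Snorm: "Cnorm K (S f) = Cnorm K0 f" for f
  proof (rule Cnorm_eq)
    have "(\<lambda>s. norm (S f s)) ` topspace K = (\<lambda>s. norm (f (h s))) ` topspace K"
      by (simp add: S_def)
    also have "\<dots> = (\<lambda>n. norm (f n)) ` topspace K0"
      by (simp add: topK0 hN[symmetric] image_image)
    finally show "(\<lambda>s. norm (S f s)) ` topspace K = (\<lambda>n. norm (f n)) ` topspace K0" .
  qed
  have embS: "C_embeds_into_C S K0 X0 K UNIV"
    unfolding C_embeds_into_C_def
  proof (intro conjI ballI allI)
    show "S ` Cfun K0 X0 \<subseteq> Cfun K UNIV"
    proof
      fix g assume "g \<in> S ` Cfun K0 X0"
      then obtain f where f: "f \<in> Cfun K0 X0" "g = S f" by blast
      have "continuous_map K euclidean (f \<circ> h)"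
        using continuous_map_compose[OF hcont, of euclidean f] f(1) by (simp add: Cfun_def)
      then have "continuous_map K euclidean (S f)"
        by (rule continuous_map_eq) (simp add: S_def)
      then show "g \<in> Cfun K UNIV" using f(2) by (simp add: Cfun_def S_def)
    qed
    show "S (\<lambda>t. f t + g t) = (\<lambda>s. S f s + S g s)" for f g
      by (rule ext) (simp add: S_def)
    show "S (\<lambda>t. c *\<^sub>R f t) = (\<lambda>s. c *\<^sub>R S f s)" for c f
      by (rule ext) (simp add: S_def)
    show "\<exists>A B. 0 < A \<and> 0 < B \<and>
        (\<forall>f\<in>Cfun K0 X0. A * Cnorm K0 f \<le> Cnorm K (S f) \<and> Cnorm K (S f) \<le> B * Cnorm K0 f)"
      by (rule exI[of _ 1], rule exI[of _ 1]) (simp add: Snorm)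
  qed
  show ?thesis
    using cK0 mK0 ctK0 subX0 clX0 sepX0 emb0 embS by blast
qed

end
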